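(* Let $M,N\in\mathbb{R}^{n\times n}$ be symmetric and assume there exists $\bar X\in\mathbb{R}^{n\times k}$ with $\bar X^\top N\bar X>0$. Then the following are equivalent: (i) $X^\top M X\ge 0$ for all $X\in\mathbb{R}^{n\times k}$ such that $X^\top N X\ge 0$; (ii) $X^\top M X\ge 0$ for all $X\in\mathbb{R}^{n\times k}$ such that $X^\top N X> 0$; (iii) there exists a scalar $\alpha\ge 0$ such that $M-\alpha N\ge 0$.
   Context: For symmetric matrices, $\ge 0$ means positive semidefinite and $>0$ means positive definite. *)

theory Defs
  imports "HOL-Analysis.Analysis"
begin

definition symmetric_mat :: "real^'m^'m \<Rightarrow> bool" where
  "symmetric_mat A \<longleftrightarrow> transpose A = A"

definition psd_mat :: "real^'m^'m \<Rightarrow> bool" where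
  "psd_mat A \<longleftrightarrow> symmetric_mat A \<and> (\<forall>v. 0 \<le> v \<bullet> (A *v v))"

definition pd_mat :: "real^'m^'m \<Rightarrow> bool" where
  "pd_mat A \<longleftrightarrow> symmetric_mat A \<and> (\<forall>v. v \<noteq> 0 \<longrightarrow> 0 < v \<bullet> (A *v v))"

end

theory Submission imports Defs begin


lemma sym_bf:
  fixes A :: "real^'n^'n"
  assumes "symmetric_mat A"
  shows "x \<bullet> (A *v y) = y \<bullet> (A *v x)"
proof -
  have "x \<bullet> (A *v y) = (x v* A) \<bullet> y" by (simp add: dot_lmul_matrix)
  also have "x v* A = transpose A *v x" by simp
  also have "\<dots> = A *v x" using assms by (simp add: symmetric_mat_def)
  finally show ?thesis by (simp add: inner_commute)
qed

lemma qf_transform: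
  fixes A :: "real^'n^'n" and X :: "real^'k^'n"
  shows "v \<bullet> ((transpose X ** A ** X) *v v) = (X *v v) \<bullet> (A *v (X *v v))"
proof -
  have "(transpose X ** A ** X) *v v = transpose X *v (A *v (X *v v))"
    by (simp add: matrix_vector_mul_assoc matrix_mul_assoc)
  moreover have "v \<bullet> (transpose X *v w) = (X *v v) \<bullet> w" for w
    by (metis dot_lmul_matrix vector_transpose_matrix)
  ultimately show ?thesis by simp
qed

lemma sym_transform:
  fixes A :: "real^'n^'n" and X :: "real^'k^'n"
  assumes "symmetric_mat A"
  shows "symmetric_mat (transpose X ** A ** X)"
  using assms unfolding symmetric_mat_def
  by (simp add: matrix_transpose_mul matrix_mul_assoc)

lemma qf_expand:
  fixes A :: "real^'n^'n"
  assumes "symmetric_mat A"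
  shows "(x + t *\<^sub>R y) \<bullet> (A *v (x + t *\<^sub>R y)) =
     x \<bullet> (A *v x) + 2*t*(x \<bullet> (A *v y)) + t^2 * (y \<bullet> (A *v y))"
proof -
  have s: "y \<bullet> (A *v x) = x \<bullet> (A *v y)" using sym_bf[OF assms] by simp
  show ?thesis
    by (simp add: matrix_vector_right_distrib matrix_vector_mult_scaleR inner_add_left inner_add_right s power2_eq_square algebra_simps)
qed


lemma lim_lemma:
  fixes A B C :: real
  assumes "\<forall>s>0. A + B * s + C * s^2 \<ge> 0"
  shows "A \<ge> 0"
proof (rule ccontr)
  assume "\<not> A \<ge> 0"
  hence A: "A < 0" by simp
  define K where "K = \<bar>B\<bar>+\<bar>C\<bar>+1"
  have K: "K > 0" unfolding K_def by (smt (verit) abs_ge_zero)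
  define s where "s = min 1 (-A/(2*K))"
  have q: "-A/(2*K) > 0" using A K by (intro divide_pos_pos) auto
  have s0: "s > 0" using q by (simp add: s_def)
  have s1: "s \<le> 1" by (simp add: s_def)
  have sl: "s \<le> -A/(2*K)" by (simp add: s_def)
  have "s * (2*K) \<le> (-A/(2*K)) * (2*K)" using sl K by (intro mult_right_mono) auto
  also have "\<dots> = -A" using K by simp
  finally have s2: "s * (2*K) \<le> -A" .
  have ss: "s^2 \<le> s" using s0 s1 by (simp add: power2_eq_square mult_left_le)
  have c1: "C * s^2 \<le> \<bar>C\<bar> * s^2" by (simp add: mult_right_mono)
  have c2: "\<bar>C\<bar> * s^2 \<le> \<bar>C\<bar> * s" using ss by (simp add: mult_left_mono)
  have b1: "B * s \<le> \<bar>B\<bar> * s" using s0 by (simp add: mult_right_mono)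
  have "(\<bar>B\<bar>+\<bar>C\<bar>) * s \<le> K * s" using s0 by (simp add: K_def mult_right_mono)
  moreover have "K * s \<le> -A/2" using s2 by (simp add: algebra_simps)
  ultimately have "A + B * s + C * s^2 < 0" using A b1 c1 c2 by (simp add: algebra_simps)
  thus False using assms s0 by auto
qed

lemma real_key:
  fixes a b c p e :: real
  assumes a: "a > 0" and c: "c < 0"
    and h: "\<forall>t. c + 2*t*b + t^2*a = 0 \<longrightarrow> p + 2*t*e \<ge> 0"
  shows "p \<ge> 0"
proof -
  define D where "D = b^2 - a*c"
  have D: "D > b^2" using a c by (simp add: D_def mult_pos_neg)
  have sD: "sqrt D > \<bar>b\<bar>" using D
    by (metis real_sqrt_abs real_sqrt_less_iff)
  have sq: "(sqrt D)^2 = D" using D by (smt (verit) real_sqrt_pow2 zero_le_power2)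
  define t1 where "t1 = (-b + sqrt D)/a"
  define t2 where "t2 = (-b - sqrt D)/a"
  have t1: "t1 > 0" using sD a by (simp add: t1_def)
  have t2: "t2 < 0" using sD a by (simp add: t2_def divide_neg_pos)
  have r1: "c + 2*t1*b + t1^2*a = 0" using a sq unfolding t1_def D_def
    by (simp add: field_simps power2_eq_square)
  have r2: "c + 2*t2*b + t2^2*a = 0" using a sq unfolding t2_def D_def
    by (simp add: field_simps power2_eq_square)
  have h1: "p + 2*t1*e \<ge> 0" using h r1 by auto
  have h2: "p + 2*t2*e \<ge> 0" using h r2 by auto
  show ?thesis
  proof (cases "e \<ge> 0")
    case True
    hence "t2*e \<le> 0" using t2 by (simp add: mult_nonpos_nonneg)
    thus ?thesis using h2 by linarith
  next
    case False
    hence "t1*e \<le> 0" using t1 by (simp add: mult_nonneg_nonpos)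
    thus ?thesis using h1 by linarith
  qed
qed

lemma closure_lemma:
  fixes M N :: "real^'n^'n"
  assumes sM: "symmetric_mat M" and sN: "symmetric_mat N"
    and x0: "x0 \<bullet> (N *v x0) > 0"
    and H: "\<forall>z. z \<bullet> (N *v z) > 0 \<longrightarrow> z \<bullet> (M *v z) \<ge> 0"
    and z: "z \<bullet> (N *v z) \<ge> 0"
  shows "z \<bullet> (M *v z) \<ge> 0"
proof (cases "z \<bullet> (N *v z) > 0")
  case True thus ?thesis using H by auto
next
  case False
  hence z0: "z \<bullet> (N *v z) = 0" using z by simp
  define a where "a = x0 \<bullet> (N *v x0)"
  define b where "b = z \<bullet> (N *v x0)"
  define aM where "aM = x0 \<bullet> (M *v x0)"
  define bM where "bM = z \<bullet> (M *v x0)"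
  have a: "a > 0" using x0 by (simp add: a_def)
  show ?thesis
  proof (cases "b \<ge> 0")
    case True
    have "\<forall>s>0. z \<bullet> (M *v z) + (2*bM) * s + aM * s^2 \<ge> 0"
    proof (intro allI impI)
      fix s :: real assume s: "s > 0"
      have "(z + s *\<^sub>R x0) \<bullet> (N *v (z + s *\<^sub>R x0)) = 2* s*b + s^2*a"
        using qf_expand[OF sN] z0 by (simp add: a_def b_def)
      moreover have "s^2*a > 0" using s a by simp
      moreover have "2* s*b \<ge> 0" using s True by simp
      ultimately have "(z + s *\<^sub>R x0) \<bullet> (N *v (z + s *\<^sub>R x0)) > 0" by linarith
      hence "(z + s *\<^sub>R x0) \<bullet> (M *v (z + s *\<^sub>R x0)) \<ge> 0" using H by auto
      moreover have "(z + s *\<^sub>R x0) \<bullet> (M *v (z + s *\<^sub>R x0)) = z \<bullet> (M *v z) + 2* s*bM + s^2*aM"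
        using qf_expand[OF sM, of z s x0] by (simp add: aM_def bM_def)
      ultimately show "z \<bullet> (M *v z) + (2*bM) * s + aM * s^2 \<ge> 0"
        by (simp add: mult.commute mult.left_commute)
    qed
    thus ?thesis by (rule lim_lemma)
  next
    case False
    have "\<forall>s>0. z \<bullet> (M *v z) + (-2*bM) * s + aM * s^2 \<ge> 0"
    proof (intro allI impI)
      fix s :: real assume s: "s > 0"
      have "(z + (-s) *\<^sub>R x0) \<bullet> (N *v (z + (-s) *\<^sub>R x0)) = 2* (-s)*b + (-s)^2*a"
        using qf_expand[OF sN, of z "-s" x0] z0 by (simp add: a_def b_def)
      moreover have "(-s)^2*a > 0" using s a by simp
      moreover have "2* (-s)*b \<ge> 0" using s False by (simp add: mult_nonpos_nonneg mult_nonneg_nonpos2 mult_le_0_iff)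
      ultimately have "(z + (-s) *\<^sub>R x0) \<bullet> (N *v (z + (-s) *\<^sub>R x0)) > 0" by linarith
      hence "(z + (-s) *\<^sub>R x0) \<bullet> (M *v (z + (-s) *\<^sub>R x0)) \<ge> 0" using H by blast
      moreover have "(z + (-s) *\<^sub>R x0) \<bullet> (M *v (z + (-s) *\<^sub>R x0)) = z \<bullet> (M *v z) + 2* (-s)*bM + (-s)^2*aM"
        using qf_expand[OF sM, of z "-s" x0] by (simp add: aM_def bM_def)
      ultimately show "z \<bullet> (M *v z) + (-2*bM) * s + aM * s^2 \<ge> 0"
        by (simp add: mult.commute mult.left_commute)
    qed
    thus ?thesis by (rule lim_lemma)
  qed
qed

lemma pairwise_lemma:
  fixes M N :: "real^'n^'n"
  assumes sM: "symmetric_mat M" and sN: "symmetric_mat N"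
    and H0: "\<forall>z. z \<bullet> (N *v z) \<ge> 0 \<longrightarrow> z \<bullet> (M *v z) \<ge> 0"
    and x: "x \<bullet> (N *v x) > 0" and y: "y \<bullet> (N *v y) < 0"
  shows "(x \<bullet> (M *v x)) / (x \<bullet> (N *v x)) * (y \<bullet> (N *v y)) \<le> y \<bullet> (M *v y)"
proof -
  define a where "a = x \<bullet> (N *v x)"
  define b where "b = y \<bullet> (N *v x)"
  define c where "c = y \<bullet> (N *v y)"
  define aM where "aM = x \<bullet> (M *v x)"
  define bM where "bM = y \<bullet> (M *v x)"
  define cM where "cM = y \<bullet> (M *v y)"
  define al where "al = aM / a"
  have a: "a > 0" using x by (simp add: a_def)
  have c: "c < 0" using y by (simp add: c_def)
  have ala: "al * a = aM" using a by (simp add: al_def)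
  have "cM - al * c \<ge> 0"
  proof (rule real_key[OF a c, of b _ "bM - al * b"], intro allI impI)
    fix t :: real assume t: "c + 2*t*b + t^2*a = 0"
    have "(y + t *\<^sub>R x) \<bullet> (N *v (y + t *\<^sub>R x)) = c + 2*t*b + t^2*a"
      using qf_expand[OF sN] by (simp add: a_def b_def c_def)
    hence "(y + t *\<^sub>R x) \<bullet> (M *v (y + t *\<^sub>R x)) \<ge> 0" using t H0 by auto
    hence "cM + 2*t*bM + t^2*aM \<ge> 0"
      using qf_expand[OF sM] by (simp add: aM_def bM_def cM_def)
    moreover have "cM - al * c + 2*t*(bM - al*b) = cM + 2*t*bM + t^2*aM - al*(c + 2*t*b + t^2*a)"
      using ala by (simp add: algebra_simps)
    ultimately show "cM - al * c + 2*t*(bM - al*b) \<ge> 0" using t by simp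
  qed
  thus ?thesis by (simp add: al_def aM_def a_def c_def cM_def)
qed


lemma vec_from_matrix:
  fixes M N :: "real^'n^'n" and Xbar :: "real^'k^'n"
  assumes sM: "symmetric_mat M" and sN: "symmetric_mat N"
    and pd: "pd_mat (transpose Xbar ** N ** Xbar)"
    and ii: "\<forall>X::real^'k^'n. pd_mat (transpose X ** N ** X) \<longrightarrow> psd_mat (transpose X ** M ** X)"
    and z: "z \<bullet> (N *v z) > 0"
  shows "z \<bullet> (M *v z) \<ge> 0"
proof -
  define one :: "real^'k" where "one = (\<chi> i. 1)"
  have one0: "one \<noteq> 0" by (simp add: one_def vec_eq_iff)
  define c where "c = transpose Xbar *v (N *v z)"
  define d where "d = (if c = 0 then one else c)"
  have d0: "d \<noteq> 0" by (simp add: d_def one0)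
  have dd: "d \<bullet> d > 0" using d0 by simp
  have cw: "w \<bullet> c = 0" if "w \<bullet> d = 0" for w using that by (simp add: d_def split: if_splits)
  have bil: "(Xbar *v w) \<bullet> (N *v z) = w \<bullet> c" for w
    by (metis c_def dot_lmul_matrix vector_transpose_matrix)
  define f where "f = (\<lambda>v. Xbar *v (v - ((d \<bullet> v)/(d \<bullet> d)) *\<^sub>R d) + ((d \<bullet> v)/(d \<bullet> d)) *\<^sub>R z)"
  have lin: "linear f"
    unfolding f_def
    by (rule linearI) (simp_all add: matrix_vector_right_distrib matrix_vector_mult_scaleR
        matrix_vector_mult_diff_distrib inner_add_right add_divide_distrib scaleR_add_left algebra_simps)
  define X :: "real^'k^'n" where "X = matrix f"
  have Xv: "X *v v = f v" for v using lin by (simp add: X_def matrix_works)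
  have pdX: "pd_mat (transpose X ** N ** X)"
    unfolding pd_mat_def
  proof (intro conjI allI impI)
    show "symmetric_mat (transpose X ** N ** X)" by (rule sym_transform[OF sN])
    fix v :: "real^'k" assume v: "v \<noteq> 0"
    define mu where "mu = (d \<bullet> v)/(d \<bullet> d)"
    define w where "w = v - mu *\<^sub>R d"
    have "w \<bullet> d = v \<bullet> d - mu * (d \<bullet> d)" by (simp add: w_def inner_diff_left)
    also have "\<dots> = 0" using dd by (simp add: mu_def inner_commute)
    finally have wd: "w \<bullet> d = 0" .
    have fv: "f v = Xbar *v w + mu *\<^sub>R z" by (simp add: f_def w_def mu_def)
    have cross: "(Xbar *v w) \<bullet> (N *v z) = 0" using bil cw[OF wd] by simp
    have e: "f v \<bullet> (N *v f v) = (Xbar *v w) \<bullet> (N *v (Xbar *v w)) + mu^2 * (z \<bullet> (N *v z))"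
      using qf_expand[OF sN, of "Xbar *v w" mu z] cross fv by simp
    have qw: "(Xbar *v w) \<bullet> (N *v (Xbar *v w)) = w \<bullet> ((transpose Xbar ** N ** Xbar) *v w)"
      by (simp add: qf_transform)
    have "f v \<bullet> (N *v f v) > 0"
    proof (cases "w = 0")
      case True
      hence "v = mu *\<^sub>R d" by (simp add: w_def)
      hence "mu \<noteq> 0" using v by auto
      hence "mu^2 * (z \<bullet> (N *v z)) > 0" using z by simp
      thus ?thesis using e True by simp
    next
      case False
      hence "w \<bullet> ((transpose Xbar ** N ** Xbar) *v w) > 0" using pd by (simp add: pd_mat_def)
      moreover have "mu^2 * (z \<bullet> (N *v z)) \<ge> 0" using z by simp
      ultimately show ?thesis using e qw by linarith
    qed
    thus "0 < v \<bullet> ((transpose X ** N ** X) *v v)" by (simp add: qf_transform Xv)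
  qed
  hence "psd_mat (transpose X ** M ** X)" using ii by blast
  hence "0 \<le> d \<bullet> ((transpose X ** M ** X) *v d)" by (simp add: psd_mat_def)
  moreover have "f d = z" using dd by (simp add: f_def)
  ultimately show ?thesis by (simp add: qf_transform Xv)
qed

lemma exists_alpha:
  fixes M N :: "real^'n^'n"
  assumes sM: "symmetric_mat M" and sN: "symmetric_mat N"
    and x0: "x0 \<bullet> (N *v x0) > 0"
    and H0: "\<forall>z. z \<bullet> (N *v z) \<ge> 0 \<longrightarrow> z \<bullet> (M *v z) \<ge> 0"
  shows "\<exists>\<alpha>::real. \<alpha> \<ge> 0 \<and> psd_mat (M - \<alpha> *\<^sub>R N)"
proof -
  define r where "r = (\<lambda>y. (y \<bullet> (M *v y)) / (y \<bullet> (N *v y)))"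
  define S where "S = insert 0 {r y | y. y \<bullet> (N *v y) < 0}"
  define al where "al = Sup S"
  have r0: "r x0 \<ge> 0" using x0 H0 by (simp add: r_def divide_nonneg_pos)
  have ub: "s \<le> r v" if s: "s \<in> S" and v: "v \<bullet> (N *v v) > 0" for s v
  proof -
    have rv: "r v \<ge> 0" using v H0 by (simp add: r_def divide_nonneg_pos)
    show ?thesis
    proof (cases "s = 0")
      case True thus ?thesis using rv by simp
    next
      case False
      then obtain y where y: "y \<bullet> (N *v y) < 0" and sy: "s = r y" using s by (auto simp: S_def)
      have "r v * (y \<bullet> (N *v y)) \<le> y \<bullet> (M *v y)"
        using pairwise_lemma[OF sM sN H0 v y] by (simp add: r_def)
      thus ?thesis using y by (simp add: sy r_def neg_divide_le_eq)
    qed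
  qed
  have bdd: "bdd_above S" unfolding bdd_above_def using ub[OF _ x0] by blast
  have ne: "S \<noteq> {}" by (simp add: S_def)
  have al0: "al \<ge> 0" unfolding al_def using bdd by (intro cSup_upper) (auto simp: S_def)
  have key: "v \<bullet> (M *v v) - al * (v \<bullet> (N *v v)) \<ge> 0" for v
  proof (cases "v \<bullet> (N *v v) > 0")
    case True
    have "al \<le> r v" unfolding al_def using ne ub[OF _ True] by (intro cSup_least) auto
    thus ?thesis using True by (simp add: r_def pos_le_divide_eq)
  next
    case False
    show ?thesis
    proof (cases "v \<bullet> (N *v v) < 0")
      case True
      have "r v \<in> S" using True by (auto simp: S_def)
      hence "r v \<le> al" unfolding al_def using bdd by (intro cSup_upper)
      thus ?thesis using True by (simp add: r_def neg_divide_le_eq)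
    next
      case False2: False
      hence "v \<bullet> (N *v v) = 0" using False by simp
      thus ?thesis using H0 by simp
    qed
  qed
  have sym: "symmetric_mat (M - al *\<^sub>R N)"
    using sM sN unfolding symmetric_mat_def by (simp add: transpose_def vec_eq_iff)
  have "psd_mat (M - al *\<^sub>R N)"
    unfolding psd_mat_def
  proof (intro conjI allI sym)
    fix v
    have "v \<bullet> ((M - al *\<^sub>R N) *v v) = v \<bullet> (M *v v) - al * (v \<bullet> (N *v v))"
      by (simp add: matrix_vector_mult_diff_rdistrib scaleR_matrix_vector_assoc[symmetric] inner_diff_right)
    thus "0 \<le> v \<bullet> ((M - al *\<^sub>R N) *v v)" using key by simp
  qed
  thus ?thesis using al0 by blast
qed

theorem theorem3:
  fixes M N :: "real^'n^'n"
    and Xbar :: "real^'k^'n"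
  assumes "symmetric_mat M" and "symmetric_mat N"
    and "pd_mat (transpose Xbar ** N ** Xbar)"
  shows "((\<forall>X :: real^'k^'n. psd_mat (transpose X ** N ** X) \<longrightarrow> psd_mat (transpose X ** M ** X))
          \<longleftrightarrow> (\<forall>X :: real^'k^'n. pd_mat (transpose X ** N ** X) \<longrightarrow> psd_mat (transpose X ** M ** X)))
       \<and> ((\<forall>X :: real^'k^'n. pd_mat (transpose X ** N ** X) \<longrightarrow> psd_mat (transpose X ** M ** X))
          \<longleftrightarrow> (\<exists>\<alpha>::real. \<alpha> \<ge> 0 \<and> psd_mat (M - \<alpha> *\<^sub>R N)))"
proof -
  note sM = assms(1) and sN = assms(2) and pd = assms(3)
  let ?I = "\<forall>X :: real^'k^'n. psd_mat (transpose X ** N ** X) \<longrightarrow> psd_mat (transpose X ** M ** X)"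
  let ?II = "\<forall>X :: real^'k^'n. pd_mat (transpose X ** N ** X) \<longrightarrow> psd_mat (transpose X ** M ** X)"
  let ?III = "\<exists>\<alpha>::real. \<alpha> \<ge> 0 \<and> psd_mat (M - \<alpha> *\<^sub>R N)"
  have i_ii: "?I \<Longrightarrow> ?II"
    unfolding pd_mat_def psd_mat_def
    by (metis order.strict_implies_order inner_zero_left order_refl)
  have iii_i: "?III \<Longrightarrow> ?I"
  proof (intro allI impI)
    fix X :: "real^'k^'n"
    assume "?III" and psdN: "psd_mat (transpose X ** N ** X)"
    then obtain al where al0: "al \<ge> 0" and P: "psd_mat (M - al *\<^sub>R N)" by blast
    show "psd_mat (transpose X ** M ** X)"
      unfolding psd_mat_def
    proof (intro conjI allI)
      show "symmetric_mat (transpose X ** M ** X)" by (rule sym_transform[OF sM])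
      fix v
      let ?u = "X *v v"
      have "?u \<bullet> ((M - al *\<^sub>R N) *v ?u) = ?u \<bullet> (M *v ?u) - al * (?u \<bullet> (N *v ?u))"
        by (simp add: matrix_vector_mult_diff_rdistrib scaleR_matrix_vector_assoc[symmetric] inner_diff_right)
      moreover have "?u \<bullet> ((M - al *\<^sub>R N) *v ?u) \<ge> 0" using P by (simp add: psd_mat_def)
      moreover have "?u \<bullet> (N *v ?u) \<ge> 0" using psdN by (simp add: psd_mat_def qf_transform)
      ultimately have "?u \<bullet> (M *v ?u) \<ge> 0" using al0
        by (smt (verit) mult_nonneg_nonneg)
      thus "0 \<le> v \<bullet> ((transpose X ** M ** X) *v v)" by (simp add: qf_transform)
    qed
  qed
  have ii_iii: "?II \<Longrightarrow> ?III"
  proof -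
    assume ii: ?II
    define one :: "real^'k" where "one = (\<chi> i. 1)"
    have one0: "one \<noteq> 0" by (simp add: one_def vec_eq_iff)
    define x0 where "x0 = Xbar *v one"
    have x0: "x0 \<bullet> (N *v x0) > 0"
      using pd one0 unfolding pd_mat_def x0_def by (simp add: qf_transform[symmetric])
    have H: "\<forall>z. z \<bullet> (N *v z) > 0 \<longrightarrow> z \<bullet> (M *v z) \<ge> 0"
      using vec_from_matrix[OF sM sN pd ii] by blast
    have H0: "\<forall>z. z \<bullet> (N *v z) \<ge> 0 \<longrightarrow> z \<bullet> (M *v z) \<ge> 0"
      using closure_lemma[OF sM sN x0 H] by blast
    show ?III by (rule exists_alpha[OF sM sN x0 H0])
  qed
  show ?thesis using i_ii iii_i ii_iii by blast
qed

end
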